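(* Fix a set $\mathfrak{p}$ of points. (a) If $(\mathfrak{p},\mathfrak{L})$ is a linear space, then the cograph $\mathcal{C}$ on $\mathfrak{p}$ defined by letting $\mathcal{C}(P,Q)$ be the unique line of $\mathfrak{L}$ containing $P$ and $Q$ is a PL-cograph. (b) If $\mathcal{C}$ is a PL-cograph on $\mathfrak{p}$, then letting, for each pair of distinct points $P,Q$, the line through $P$ and $Q$ be the set of all endpoints of all pairs $\{R,S\}$ with $\mathcal{C}(R,S)=\mathcal{C}(P,Q)$, yields a well-defined linear space on $\mathfrak{p}$. (c) These two constructions are mutually inverse (PL-cographs being considered up to renaming of edge values), so linear spaces on $\mathfrak{p}$ and PL-cographs on $\mathfrak{p}$ are in one-to-one correspondence.
   Context: A cograph is a function $\mathcal{C}$ assigning to each unordered pair $\{P,Q\}$ of distinct elements of a set of points a value $\mathcal{C}(P,Q)$ (an edge). A PL-cograph is a cograph satisfying: (1) for distinct points $P,Q,R$, if $\mathcal{C}(P,Q)=\mathcal{C}(Q,R)$ then $\mathcal{C}(P,Q)=\mathcal{C}(P,R)$; (2) for distinct points $P,Q,R,S$, if $\mathcal{C}(P,Q)=\mathcal{C}(R,S)$ then $\mathcal{C}(P,Q)=\mathcal{C}(P,R)=\mathcal{C}(P,S)=\mathcal{C}(Q,R)=\mathcal{C}(Q,S)$. A linear space $(\mathfrak{p},\mathfrak{L})$ consists of a set $\mathfrak{p}$ of points and a set $\mathfrak{L}$ of lines, each line a subset of $\mathfrak{p}$, such that any two distinct points belong to exactly one line and every line has at least two points. *)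

theory Defs
  imports Main
begin

text \<open>Unordered pairs of distinct points of p; a cograph on p is a function
  from such pairs to edge values, modelled as a function on 2-element sets.\<close>
definition edges :: "'a set \<Rightarrow> 'a set set" where
  "edges p = {{P, Q} | P Q. P \<in> p \<and> Q \<in> p \<and> P \<noteq> Q}"

definition PL_cograph :: "'a set \<Rightarrow> ('a set \<Rightarrow> 'b) \<Rightarrow> bool" where
  "PL_cograph p C \<longleftrightarrow>
     (\<forall>P\<in>p. \<forall>Q\<in>p. \<forall>R\<in>p. P \<noteq> Q \<and> P \<noteq> R \<and> Q \<noteq> R \<longrightarrow>
        C {P, Q} = C {Q, R} \<longrightarrow> C {P, Q} = C {P, R}) \<and>
     (\<forall>P\<in>p. \<forall>Q\<in>p. \<forall>R\<in>p. \<forall>S\<in>p.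
        P \<noteq> Q \<and> P \<noteq> R \<and> P \<noteq> S \<and> Q \<noteq> R \<and> Q \<noteq> S \<and> R \<noteq> S \<longrightarrow>
        C {P, Q} = C {R, S} \<longrightarrow>
        C {P, Q} = C {P, R} \<and> C {P, Q} = C {P, S} \<and>
        C {P, Q} = C {Q, R} \<and> C {P, Q} = C {Q, S})"

definition linear_space :: "'a set \<Rightarrow> 'a set set \<Rightarrow> bool" where
  "linear_space p L \<longleftrightarrow>
     (\<forall>l\<in>L. l \<subseteq> p \<and> (\<exists>P Q. P \<in> l \<and> Q \<in> l \<and> P \<noteq> Q)) \<and>
     (\<forall>P\<in>p. \<forall>Q\<in>p. P \<noteq> Q \<longrightarrow> (\<exists>!l. l \<in> L \<and> P \<in> l \<and> Q \<in> l))"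

definition line_cograph :: "'a set set \<Rightarrow> 'a set \<Rightarrow> 'a set" where
  "line_cograph L e = (THE l. l \<in> L \<and> e \<subseteq> l)"

definition cograph_line :: "'a set \<Rightarrow> ('a set \<Rightarrow> 'b) \<Rightarrow> 'a \<Rightarrow> 'a \<Rightarrow> 'a set" where
  "cograph_line p C P Q =
     {X. \<exists>R\<in>p. \<exists>S\<in>p. R \<noteq> S \<and> C {R, S} = C {P, Q} \<and> (X = R \<or> X = S)}"

definition lines_of :: "'a set \<Rightarrow> ('a set \<Rightarrow> 'b) \<Rightarrow> 'a set set" where
  "lines_of p C = {cograph_line p C P Q | P Q. P \<in> p \<and> Q \<in> p \<and> P \<noteq> Q}"

end

theory Submission
  imports Defs
begin

lemma pl1:
  assumes "PL_cograph p C" "P \<in> p" "Q \<in> p" "R \<in> p" "P \<noteq> Q" "P \<noteq> R" "Q \<noteq> R"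
    "C {P, Q} = C {Q, R}"
  shows "C {P, Q} = C {P, R}"
  using assms unfolding PL_cograph_def by blast

lemma pl2:
  assumes "PL_cograph p C" "P \<in> p" "Q \<in> p" "R \<in> p" "S \<in> p"
    "P \<noteq> Q" "P \<noteq> R" "P \<noteq> S" "Q \<noteq> R" "Q \<noteq> S" "R \<noteq> S"
    "C {P, Q} = C {R, S}"
  shows "C {P, Q} = C {P, R}"
  using assms unfolding PL_cograph_def by blast

lemma key0:
  assumes pl: "PL_cograph p C" and mem: "X \<in> p" "S \<in> p" "Y \<in> p" "S' \<in> p"
    and h: "C {X, S} = c" "C {Y, S'} = c" "X \<noteq> S" "Y \<noteq> S'" "X \<noteq> Y"
  shows "C {X, Y} = c"
proof (cases "S = Y")
  case True then show ?thesis using h by simp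
next
  case nSY: False
  show ?thesis
  proof (cases "S' = X")
    case True then show ?thesis using h by (simp add: insert_commute)
  next
    case nSX: False
    show ?thesis
    proof (cases "S = S'")
      case True
      have "C {X, S} = C {S, Y}" using h True by (simp add: insert_commute)
      from pl1[OF pl mem(1,2,3) h(3) h(5) nSY this] h show ?thesis by simp
    next
      case False
      have "C {X, S} = C {Y, S'}" using h by simp
      from pl2[OF pl mem(1,2,3,4) h(3) h(5) _ nSY False h(4) this] nSX h show ?thesis by auto
    qed
  qed
qed

lemma mem_line:
  "X \<in> cograph_line p C A B \<longleftrightarrow> X \<in> p \<and> (\<exists>S\<in>p. S \<noteq> X \<and> C {X, S} = C {A, B})"
  unfolding cograph_line_def by (auto simp: insert_commute)

lemma line_pair:
  assumes pl: "PL_cograph p C" and "X \<in> cograph_line p C A B" "Y \<in> cograph_line p C A B" "X \<noteq> Y"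
  shows "C {X, Y} = C {A, B}"
proof -
  obtain S where S: "X \<in> p" "S \<in> p" "S \<noteq> X" "C {X, S} = C {A, B}" using assms(2) mem_line by metis
  obtain S' where S': "Y \<in> p" "S' \<in> p" "S' \<noteq> Y" "C {Y, S'} = C {A, B}" using assms(3) mem_line by metis
  show ?thesis using key0[OF pl S(1,2) S'(1,2) S(4) S'(4)] S S' assms(4) by auto
qed

lemma line_eq: "C {A, B} = C {P, Q} \<Longrightarrow> cograph_line p C A B = cograph_line p C P Q"
  unfolding cograph_line_def by simp

lemma self_mem: "P \<in> p \<Longrightarrow> Q \<in> p \<Longrightarrow> P \<noteq> Q \<Longrightarrow> P \<in> cograph_line p C P Q \<and> Q \<in> cograph_line p C P Q"
  unfolding cograph_line_def by blast

lemma partb: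
  assumes pl: "PL_cograph p C"
  shows "linear_space p (lines_of p C)"
  unfolding linear_space_def
proof (intro conjI)
  show "\<forall>l\<in>lines_of p C. l \<subseteq> p \<and> (\<exists>P Q. P \<in> l \<and> Q \<in> l \<and> P \<noteq> Q)"
  proof
  fix l assume "l \<in> lines_of p C"
  then obtain P Q where "P \<in> p" "Q \<in> p" "P \<noteq> Q" "l = cograph_line p C P Q"
    unfolding lines_of_def by blast
  then show "l \<subseteq> p \<and> (\<exists>P Q. P \<in> l \<and> Q \<in> l \<and> P \<noteq> Q)"
    using self_mem[of P p Q C] unfolding cograph_line_def by blast
  qed
next
  show "\<forall>P\<in>p. \<forall>Q\<in>p. P \<noteq> Q \<longrightarrow> (\<exists>!l. l \<in> lines_of p C \<and> P \<in> l \<and> Q \<in> l)"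
  proof (intro ballI impI)
  fix P Q assume PQ: "P \<in> p" "Q \<in> p" "P \<noteq> Q"
  show "\<exists>!l. l \<in> lines_of p C \<and> P \<in> l \<and> Q \<in> l"
  proof (rule ex1I[of _ "cograph_line p C P Q"])
    show "cograph_line p C P Q \<in> lines_of p C \<and> P \<in> cograph_line p C P Q \<and> Q \<in> cograph_line p C P Q"
      using PQ self_mem[OF PQ] unfolding lines_of_def by blast
  next
    fix l assume l: "l \<in> lines_of p C \<and> P \<in> l \<and> Q \<in> l"
    then obtain A B where "l = cograph_line p C A B" unfolding lines_of_def by blast
    with l line_pair[OF pl _ _ PQ(3)] have "C {P, Q} = C {A, B}" by blast
    then have "cograph_line p C A B = cograph_line p C P Q" by (intro line_eq) simp
    then show "l = cograph_line p C P Q" using \<open>l = _\<close> by simp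
  qed
  qed
qed

lemma ls_uniq:
  assumes ls: "linear_space p L" and "P \<in> p" "Q \<in> p" "P \<noteq> Q"
  shows "\<exists>!l. l \<in> L \<and> P \<in> l \<and> Q \<in> l"
proof -
  have "\<forall>P\<in>p. \<forall>Q\<in>p. P \<noteq> Q \<longrightarrow> (\<exists>!l. l \<in> L \<and> P \<in> l \<and> Q \<in> l)"
    using ls unfolding linear_space_def by (rule conjunct2)
  then show ?thesis using assms(2-4) by simp
qed

lemma ls_line:
  assumes ls: "linear_space p L" and l: "l \<in> L"
  shows "l \<subseteq> p \<and> (\<exists>P Q. P \<in> l \<and> Q \<in> l \<and> P \<noteq> Q)"
proof -
  have "\<forall>l\<in>L. l \<subseteq> p \<and> (\<exists>P Q. P \<in> l \<and> Q \<in> l \<and> P \<noteq> Q)"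
    using ls unfolding linear_space_def by (rule conjunct1)
  then show ?thesis using l by blast
qed

lemma lc:
  assumes ls: "linear_space p L" and "P \<in> p" "Q \<in> p" "P \<noteq> Q" "l \<in> L" "P \<in> l" "Q \<in> l"
  shows "line_cograph L {P, Q} = l"
  unfolding line_cograph_def
proof (rule the_equality)
  show "l \<in> L \<and> {P, Q} \<subseteq> l" using assms by blast
next
  fix l' assume "l' \<in> L \<and> {P, Q} \<subseteq> l'"
  then have "l' \<in> L \<and> P \<in> l' \<and> Q \<in> l'" by simp
  moreover have "l \<in> L \<and> P \<in> l \<and> Q \<in> l" using assms by simp
  ultimately show "l' = l" using ls_uniq[OF assms(1-4)] by (metis (no_types, lifting))
qed

lemma ex_line:
  assumes ls: "linear_space p L" and "P \<in> p" "Q \<in> p" "P \<noteq> Q"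
  obtains l where "l \<in> L" "P \<in> l" "Q \<in> l"
  using ls_uniq[OF assms] by blast

lemma parta:
  assumes ls: "linear_space p L"
  shows "PL_cograph p (line_cograph L)"
  unfolding PL_cograph_def
proof (intro conjI[OF ballI ballI] ballI impI)
  fix P Q R assume m: "P \<in> p" "Q \<in> p" "R \<in> p" and d: "P \<noteq> Q \<and> P \<noteq> R \<and> Q \<noteq> R"
    and e: "line_cograph L {P, Q} = line_cograph L {Q, R}"
  obtain l1 where l1: "l1 \<in> L" "P \<in> l1" "Q \<in> l1" using ex_line[OF ls m(1,2)] d by blast
  obtain l2 where l2: "l2 \<in> L" "Q \<in> l2" "R \<in> l2" using ex_line[OF ls m(2,3)] d by blast
  have a: "line_cograph L {P, Q} = l1" using lc[OF ls m(1,2) _ l1] d by blast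
  have b: "line_cograph L {Q, R} = l2" using lc[OF ls m(2,3) _ l2] d by blast
  have "l1 = l2" using a b e by simp
  then show "line_cograph L {P, Q} = line_cograph L {P, R}"
    using a lc[OF ls m(1,3) _ l1(1,2)] l2 d by simp
next
  fix P Q R S assume m: "P \<in> p" "Q \<in> p" "R \<in> p" "S \<in> p"
    and d: "P \<noteq> Q \<and> P \<noteq> R \<and> P \<noteq> S \<and> Q \<noteq> R \<and> Q \<noteq> S \<and> R \<noteq> S"
    and e: "line_cograph L {P, Q} = line_cograph L {R, S}"
  obtain l1 where l1: "l1 \<in> L" "P \<in> l1" "Q \<in> l1" using ex_line[OF ls m(1,2)] d by blast
  obtain l2 where l2: "l2 \<in> L" "R \<in> l2" "S \<in> l2" using ex_line[OF ls m(3,4)] d by blast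
  have a: "line_cograph L {P, Q} = l1" using lc[OF ls m(1,2) _ l1] d by blast
  have b: "line_cograph L {R, S} = l2" using lc[OF ls m(3,4) _ l2] d by blast
  have "l1 = l2" using a b e by simp
  then have R: "R \<in> l1" "S \<in> l1" using l2 by auto
  show "line_cograph L {P, Q} = line_cograph L {P, R} \<and>
        line_cograph L {P, Q} = line_cograph L {P, S} \<and>
        line_cograph L {P, Q} = line_cograph L {Q, R} \<and>
        line_cograph L {P, Q} = line_cograph L {Q, S}"
    using a lc[OF ls m(1,3) _ l1(1,2) R(1)] lc[OF ls m(1,4) _ l1(1,2) R(2)]
      lc[OF ls m(2,3) _ l1(1,3) R(1)] lc[OF ls m(2,4) _ l1(1,3) R(2)] d by simp
qed

lemma cl_line:
  assumes ls: "linear_space p L" and l: "l \<in> L" "P \<in> l" "Q \<in> l" "P \<noteq> Q"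
  shows "cograph_line p (line_cograph L) P Q = l"
proof -
  have lp: "l \<subseteq> p" using ls_line[OF ls l(1)] by blast
  have PQ: "line_cograph L {P, Q} = l" using lc[OF ls _ _ l(4,1,2,3)] lp l by blast
  show ?thesis
  proof
    show "cograph_line p (line_cograph L) P Q \<subseteq> l"
    proof
      fix X assume "X \<in> cograph_line p (line_cograph L) P Q"
      then obtain S where S: "X \<in> p" "S \<in> p" "S \<noteq> X" "line_cograph L {X, S} = l"
        unfolding mem_line PQ by blast
      obtain l' where l': "l' \<in> L" "X \<in> l'" "S \<in> l'" using ex_line[OF ls S(1,2)] S(3) by metis
      have "line_cograph L {X, S} = l'" using lc[OF ls S(1,2) _ l'] S(3) by metis
      then show "X \<in> l" using S l' by simp
    qed
  next
    show "l \<subseteq> cograph_line p (line_cograph L) P Q"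
    proof
      fix X assume X: "X \<in> l"
      obtain Y where Y: "Y \<in> l" "Y \<noteq> X" using l by blast
      have "line_cograph L {X, Y} = l" using lc[OF ls _ _ _ l(1) X Y(1)] lp X Y by blast
      then show "X \<in> cograph_line p (line_cograph L) P Q"
        unfolding mem_line PQ using X Y lp by blast
    qed
  qed
qed

lemma partc:
  assumes ls: "linear_space p L"
  shows "lines_of p (line_cograph L) = L"
proof
  show "lines_of p (line_cograph L) \<subseteq> L"
  proof
    fix l assume "l \<in> lines_of p (line_cograph L)"
    then obtain P Q where PQ: "P \<in> p" "Q \<in> p" "P \<noteq> Q" "l = cograph_line p (line_cograph L) P Q"
      unfolding lines_of_def by blast
    obtain l' where l': "l' \<in> L" "P \<in> l'" "Q \<in> l'" using ex_line[OF ls PQ(1-3)] by metis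
    show "l \<in> L" using cl_line[OF ls l' PQ(3)] PQ(4) l'(1) by simp
  qed
next
  show "L \<subseteq> lines_of p (line_cograph L)"
  proof
    fix l assume l: "l \<in> L"
    then obtain P Q where PQ: "P \<in> l" "Q \<in> l" "P \<noteq> Q" and lp: "l \<subseteq> p"
      using ls_line[OF ls] by blast
    show "l \<in> lines_of p (line_cograph L)"
      using cl_line[OF ls l PQ] PQ lp unfolding lines_of_def by blast
  qed
qed

lemma partd:
  assumes pl: "PL_cograph p C"
  shows "\<exists>f. inj_on f (C ` edges p) \<and>
                 (\<forall>e\<in>edges p. line_cograph (lines_of p C) e = f (C e))"
proof -
  define f where "f v = {X. \<exists>R\<in>p. \<exists>S\<in>p. R \<noteq> S \<and> C {R, S} = v \<and> (X = R \<or> X = S)}" for v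
  have fc: "f (C {P, Q}) = cograph_line p C P Q" for P Q
    unfolding f_def cograph_line_def by simp
  have ls: "linear_space p (lines_of p C)" by (rule partb[OF pl])
  show ?thesis
  proof (intro exI conjI ballI)
    show "inj_on f (C ` edges p)"
    proof (rule inj_onI)
      fix v w assume "v \<in> C ` edges p" "w \<in> C ` edges p" and e: "f v = f w"
      then obtain P Q P' Q' where a: "P \<in> p" "Q \<in> p" "P \<noteq> Q" "v = C {P, Q}"
        and b: "P' \<in> p" "Q' \<in> p" "P' \<noteq> Q'" "w = C {P', Q'}"
        unfolding edges_def by blast
      have "P \<in> cograph_line p C P' Q'" "Q \<in> cograph_line p C P' Q'"
        using self_mem[OF a(1-3), of C] e a(4) b(4) fc by metis+
      then show "v = w" using line_pair[OF pl _ _ a(3)] a(4) b(4) by metis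
    qed
  next
    fix e assume "e \<in> edges p"
    then obtain P Q where a: "P \<in> p" "Q \<in> p" "P \<noteq> Q" "e = {P, Q}"
      unfolding edges_def by blast
    have "cograph_line p C P Q \<in> lines_of p C" using a unfolding lines_of_def by blast
    then have "line_cograph (lines_of p C) {P, Q} = cograph_line p C P Q"
      using lc[OF ls a(1-3)] self_mem[OF a(1-3)] by blast
    then show "line_cograph (lines_of p C) e = f (C e)" using a(4) fc by simp
  qed
qed

theorem theorem5p2:
  fixes p :: "'a set"
  shows "(\<forall>L. linear_space p L \<longrightarrow> PL_cograph p (line_cograph L))
       \<and> (\<forall>C :: 'a set \<Rightarrow> 'b. PL_cograph p C \<longrightarrow> linear_space p (lines_of p C))
       \<and> (\<forall>L. linear_space p L \<longrightarrow> lines_of p (line_cograph L) = L)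
       \<and> (\<forall>C :: 'a set \<Rightarrow> 'b. PL_cograph p C \<longrightarrow>
            (\<exists>f. inj_on f (C ` edges p) \<and>
                 (\<forall>e\<in>edges p. line_cograph (lines_of p C) e = f (C e))))"
  apply (intro conjI allI impI)
     apply (erule parta)
    apply (erule partb)
   apply (erule partc)
  apply (erule partd)
  done

end
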